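(* Let $X_1,\dots,X_n$ be i.i.d. real random variables whose common distribution is symmetric about $\mu\in\mathbb{R}$ and satisfies $\mathbb{E}\big[|X_1-\mathbb{E}X_1|^{1+a}\big]=M<\infty$ for some $a\in(0,1]$. Take $m=2$, let $k\le n$ be an integer, $\tilde n=\lfloor n/k\rfloor$, let $R(\theta)$ be the one-sided resampled median-of-means rank defined in the context, and $U=\sup\{\theta: R(\theta)=1\}$. Then $$\mathbb{P}\Big(U-\mu>4(12M)^{1/(1+a)}\Big(\frac{1}{\tilde n}\Big)^{\frac{a}{1+a}}\Big)\le 2k\exp(-\tilde n/8)+2\exp(-k/8).$$
   Context: Blocks: for $\ell=1,\dots,k$ let $B_\ell=\{i\in[n]: i\equiv \ell \pmod k\}$. Median: for reals $y_1,\dots,y_k$ with order statistics $y_{(1)}\le\dots\le y_{(k)}$, $\mathrm{med}(y_1,\dots,y_k)=y_{(k/2)}$ if $k$ is even and $y_{(\lfloor k/2\rfloor+1)}$ if $k$ is odd. Median-of-means: $\widehat\mu(x_1,\dots,x_n)=\mathrm{med}\big(\frac{1}{|B_1|}\sum_{i\in B_1}x_i,\dots,\frac{1}{|B_k|}\sum_{i\in B_k}x_i\big)$. Randomization: $\alpha_{1,1},\dots,\alpha_{n,1}$ i.i.d. Rademacher signs independent of the data; $\pi$ a uniformly random permutation of $\{0,1\}$ independent of data and signs. For $\theta\in\mathbb{R}$: $\mathcal{D}_0(\theta)=(X_1,\dots,X_n)$, $\mathcal{D}_1(\theta)=(\alpha_{1,1}(X_1-\theta)+\theta,\dots,\alpha_{n,1}(X_n-\theta)+\theta)$;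 $S_j(\theta)=\widehat\mu(\mathcal{D}_j(\theta))-\theta$ for $j=0,1$. $S_0(\theta)\prec_\pi S_1(\theta)$ iff $S_0(\theta)<S_1(\theta)$, or $S_0(\theta)=S_1(\theta)$ and $\pi(0)<\pi(1)$. $R(\theta)=1+\mathbb{I}\big(S_0(\theta)\prec_\pi S_1(\theta)\big)$. The supremum of the empty set is $-\infty$. *)

theory Defs
  imports "HOL-Probability.Probability"
begin

text \<open>Median of y_1..y_k: the (k/2)-th order statistic for even k,
  the (floor(k/2)+1)-th for odd k (1-based), here 0-based list indices.\<close>
definition med :: "nat \<Rightarrow> (nat \<Rightarrow> real) \<Rightarrow> real" where
  "med k y = (let ys = sort (map y [1..<k+1]) in
                if even k then ys ! (k div 2 - 1) else ys ! (k div 2))"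

definition block :: "nat \<Rightarrow> nat \<Rightarrow> nat \<Rightarrow> nat set" where
  "block n k l = {i \<in> {1..n}. i mod k = l mod k}"

definition mom :: "nat \<Rightarrow> nat \<Rightarrow> (nat \<Rightarrow> real) \<Rightarrow> real" where
  "mom n k x = med k (\<lambda>l. (\<Sum>i\<in>block n k l. x i) / real (card (block n k l)))"

text \<open>Rank R(theta) for data x, signs s, and tie-break bit p, where p means pi(0) < pi(1).\<close>
definition rmom_rank :: "nat \<Rightarrow> nat \<Rightarrow> (nat \<Rightarrow> real) \<Rightarrow> (nat \<Rightarrow> real) \<Rightarrow> bool \<Rightarrow> real \<Rightarrow> nat" where
  "rmom_rank n k x s p \<theta> =
     (let S0 = mom n k x - \<theta>;
          S1 = mom n k (\<lambda>i. s i * (x i - \<theta>) + \<theta>) - \<theta>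
      in 1 + (if S0 < S1 \<or> (S0 = S1 \<and> p) then 1 else 0))"

text \<open>U = sup {theta : R(theta) = 1}, in the extended reals (sup of empty set = -infinity).\<close>
definition rmom_U :: "nat \<Rightarrow> nat \<Rightarrow> (nat \<Rightarrow> real) \<Rightarrow> (nat \<Rightarrow> real) \<Rightarrow> bool \<Rightarrow> ereal" where
  "rmom_U n k x s p = Sup (ereal ` {\<theta>. rmom_rank n k x s p \<theta> = 1})"

text \<open>Outer probability of a (possibly non-measurable) event; equals its probability when measurable.\<close>
definition outer_prob :: "'a measure \<Rightarrow> 'a set \<Rightarrow> real" where
  "outer_prob M E = Inf (measure M ` {A \<in> sets M. E \<inter> space M \<subseteq> A})"

end

theory Submission
  imports Defs
begin


lemma med_idx:
  fixes k :: nat and v :: "nat \<Rightarrow> real"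
  defines "ys \<equiv> sort (map v [1..<k+1])"
  defines "j \<equiv> (if even k then k div 2 - 1 else k div 2)"
  shows "med k v = ys ! j" "length ys = k"
  unfolding med_def ys_def j_def by (auto simp: Let_def)

lemma count_sort:
  fixes v :: "nat \<Rightarrow> real"
  shows "length (filter P (sort (map v [1..<k+1]))) = card {l\<in>{1..k}. P (v l)}"
proof -
  have "length (filter P (sort (map v [1..<k+1]))) = length (filter P (map v [1..<k+1]))"
    by (metis filter_sort length_sort)
  also have "\<dots> = length (filter (P \<circ> v) [1..<k+1])" by (simp add: filter_map)
  also have "\<dots> = card (set (filter (P \<circ> v) [1..<k+1]))"
    by (metis distinct_card distinct_filter distinct_upt)
  also have "set (filter (P \<circ> v) [1..<k+1]) = {l\<in>{1..k}. P (v l)}" by auto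
  finally show ?thesis .
qed

lemma med_gt:
  fixes v :: "nat \<Rightarrow> real"
  assumes "1 \<le> k" "med k v > t"
  shows "k \<le> 2 * card {l\<in>{1..k}. v l > t}"
proof -
  define ys where "ys = sort (map v [1..<k+1])"
  define j where "j = (if even k then k div 2 - 1 else k div 2)"
  have m: "med k v = ys ! j" and len: "length ys = k" using med_idx unfolding ys_def j_def by auto
  have jk: "j < k" using assms(1) unfolding j_def by auto
  have srt: "sorted ys" unfolding ys_def by simp
  have "{j..<k} \<subseteq> {i. i < length ys \<and> t < ys ! i}"
  proof
    fix i assume "i \<in> {j..<k}"
    then have "ys ! j \<le> ys ! i" using sorted_nth_mono[OF srt] len by auto
    then show "i \<in> {i. i < length ys \<and> t < ys ! i}" using \<open>i \<in> {j..<k}\<close> assms m len by auto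
  qed
  then have "card {j..<k} \<le> card {i. i < length ys \<and> t < ys ! i}" by (intro card_mono) auto
  also have "\<dots> = length (filter (\<lambda>x. t < x) ys)" by (simp add: length_filter_conv_card)
  also have "\<dots> = card {l\<in>{1..k}. v l > t}" unfolding ys_def by (rule count_sort)
  finally have "k - j \<le> card {l\<in>{1..k}. v l > t}" by simp
  moreover have "k \<le> 2 * (k - j)" unfolding j_def using assms(1) by auto
  ultimately show ?thesis by linarith
qed

lemma med_le:
  fixes v :: "nat \<Rightarrow> real"
  assumes "1 \<le> k" "k < 2 * card {l\<in>{1..k}. v l > t}"
  shows "med k v > t"
proof (rule ccontr)
  assume "\<not> med k v > t"
  define ys where "ys = sort (map v [1..<k+1])"
  define j where "j = (if even k then k div 2 - 1 else k div 2)"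
  have m: "med k v = ys ! j" and len: "length ys = k" using med_idx unfolding ys_def j_def by auto
  have jk: "j < k" using assms(1) unfolding j_def by auto
  have srt: "sorted ys" unfolding ys_def by simp
  have "{i. i < length ys \<and> t < ys ! i} \<subseteq> {j+1..<k}"
  proof
    fix i assume i: "i \<in> {i. i < length ys \<and> t < ys ! i}"
    have "j < i"
    proof (rule ccontr)
      assume "\<not> j < i"
      then have "ys ! i \<le> ys ! j" using sorted_nth_mono[OF srt] len jk by auto
      then show False using i \<open>\<not> med k v > t\<close> m by auto
    qed
    then show "i \<in> {j+1..<k}" using i len by auto
  qed
  then have "card {i. i < length ys \<and> t < ys ! i} \<le> card {j+1..<k}" by (intro card_mono) auto
  moreover have "card {i. i < length ys \<and> t < ys ! i} = card {l\<in>{1..k}. v l > t}"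
    unfolding ys_def by (simp only: length_filter_conv_card[symmetric] count_sort)
  ultimately have "card {l\<in>{1..k}. v l > t} \<le> k - (j+1)" by simp
  moreover have "2 * (k - (j+1)) \<le> k" unfolding j_def using assms(1) by auto
  ultimately show False using assms(2) by linarith
qed

lemma block_sub: "block n k l \<subseteq> {1..n}" "finite (block n k l)"
  unfolding block_def by auto

lemma block_disj:
  assumes "l \<in> {1..k}" "l' \<in> {1..k}" "l \<noteq> l'"
  shows "block n k l \<inter> block n k l' = {}"
proof -
  have "l mod k \<noteq> l' mod k"
  proof
    assume h: "l mod k = l' mod k"
    have "l = (if l = k then 0 else l mod k) + (if l = k then k else 0)" using assms by auto
    then show False using assms h
      by (metis atLeastAtMost_iff le_neq_implies_less mod_less mod_self nat_neq_iff not_one_le_zero)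
  qed
  then show ?thesis unfolding block_def by auto
qed

lemma block_card:
  assumes "l \<in> {1..k}" "k \<le> n"
  shows "n div k \<le> card (block n k l)"
proof -
  have "(\<lambda>j. l + j * k) ` {0..<n div k} \<subseteq> block n k l"
  proof
    fix x assume "x \<in> (\<lambda>j. l + j * k) ` {0..<n div k}"
    then obtain j where j: "j < n div k" "x = l + j * k" by auto
    have "(j+1) * k \<le> (n div k) * k" using j by (intro mult_right_mono) auto
    also have "\<dots> \<le> n" by simp
    finally have "l + j * k \<le> n" using assms by (simp add: algebra_simps)
    then show "x \<in> block n k l" using j assms unfolding block_def by auto
  qed
  moreover have "inj_on (\<lambda>j. l + j * k) {0..<n div k}" using assms by (auto simp: inj_on_def)
  ultimately have "card {0..<n div k} \<le> card (block n k l)"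
    by (metis block_sub(2) card_image card_mono)
  then show ?thesis by simp
qed



lemma det:
  fixes x \<alpha> :: "nat \<Rightarrow> real"
  assumes k: "1 \<le> k" "k \<le> n" and s: "0 \<le> s"
  and h1: "\<not> (real k \<le> 2 * (\<Sum>l\<in>{1..k}. of_bool ((\<Sum>i\<in>block n k l. x i - \<mu>) > real (card (block n k l)) * s)))"
  and h2: "\<not> (real k \<le> 2 * (\<Sum>l\<in>{1..k}. of_bool ((\<Sum>i\<in>block n k l. \<alpha> i * (x i - \<mu>)) < - (real (card (block n k l)) * s))))"
  and h3: "\<forall>l\<in>{1..k}. (\<Sum>i\<in>block n k l. \<alpha> i) < real (card (block n k l)) / 2"
  shows "rmom_U n k x \<alpha> p \<le> ereal (\<mu> + 4 * s)"
proof -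
  define c where "c l = real (card (block n k l))" for l
  have cpos: "c l > 0" if "l \<in> {1..k}" for l
  proof -
    have "0 < n div k" using k by (simp add: div_greater_zero_iff)
    then have "1 \<le> n div k" by simp
    also have "\<dots> \<le> card (block n k l)" using block_card[OF that k(2)] .
    finally show ?thesis unfolding c_def by simp
  qed
  have sx: "(\<Sum>i\<in>block n k l. x i - \<mu>) = (\<Sum>i\<in>block n k l. x i) - c l * \<mu>" for l
    by (simp add: sum_subtractf c_def)
  have C1: "card {l\<in>{1..k}. (\<Sum>i\<in>block n k l. x i - \<mu>) > c l * s} * 2 < k"
    using h1 by (simp add: c_def Int_def conj_commute)
  have C2: "card {l\<in>{1..k}. (\<Sum>i\<in>block n k l. \<alpha> i * (x i - \<mu>)) < - (c l * s)} * 2 < k"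
    using h2 by (simp add: c_def Int_def conj_commute)
  have mx: "mom n k x \<le> \<mu> + s"
  proof (rule ccontr)
    assume "\<not> mom n k x \<le> \<mu> + s"
    then have "k \<le> 2 * card {l\<in>{1..k}. (\<Sum>i\<in>block n k l. x i) / real (card (block n k l)) > \<mu> + s}"
      unfolding mom_def by (intro med_gt k) auto
    also have "{l\<in>{1..k}. (\<Sum>i\<in>block n k l. x i) / real (card (block n k l)) > \<mu> + s}
       = {l\<in>{1..k}. (\<Sum>i\<in>block n k l. x i - \<mu>) > c l * s}"
    proof (intro Collect_cong conj_cong refl)
      fix l assume "l \<in> {1..k}"
      then have "c l > 0" by (rule cpos)
      then show "((\<Sum>i\<in>block n k l. x i) / real (card (block n k l)) > \<mu> + s) =
           ((\<Sum>i\<in>block n k l. x i - \<mu>) > c l * s)"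
        unfolding sx by (simp add: c_def[symmetric] pos_less_divide_eq algebra_simps)
    qed
    finally show False using C1 by linarith
  qed
  show ?thesis
    unfolding rmom_U_def
  proof (rule Sup_least, clarsimp)
    fix \<theta> assume r: "rmom_rank n k x \<alpha> p \<theta> = Suc 0"
    show "\<theta> \<le> \<mu> + 4 * s"
    proof (rule ccontr)
      assume th: "\<not> \<theta> \<le> \<mu> + 4 * s"
      define w where "w i = \<alpha> i * (x i - \<theta>) + \<theta>" for i
      have le: "mom n k w \<le> mom n k x"
        using r unfolding rmom_rank_def Let_def w_def by (auto split: if_splits)
      have sub: "{l\<in>{1..k}. \<not> (\<Sum>i\<in>block n k l. \<alpha> i * (x i - \<mu>)) < - (c l * s)}
          \<subseteq> {l\<in>{1..k}. (\<Sum>i\<in>block n k l. w i) / real (card (block n k l)) > \<mu> + s}"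
      proof clarsimp
        fix l assume l: "Suc 0 \<le> l" "l \<le> k" and ge: "\<not> (\<Sum>i\<in>block n k l. \<alpha> i * (x i - \<mu>)) < - (c l * s)"
        have cl: "c l > 0" using l cpos by auto
        have a3: "(\<Sum>i\<in>block n k l. \<alpha> i) < c l / 2" using h3 l unfolding c_def by auto
        have "(\<Sum>i\<in>block n k l. w i) = (\<Sum>i\<in>block n k l. \<alpha> i * (x i - \<mu>) + \<mu> + (\<theta> - \<mu>) * (1 - \<alpha> i))"
          unfolding w_def by (intro sum.cong) (auto simp: algebra_simps)
        also have "\<dots> = (\<Sum>i\<in>block n k l. \<alpha> i * (x i - \<mu>)) + c l * \<mu> + (\<theta> - \<mu>) * (c l - (\<Sum>i\<in>block n k l. \<alpha> i))"
          by (simp add: sum.distrib sum_subtractf sum_distrib_left c_def algebra_simps)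
        finally have eq: "(\<Sum>i\<in>block n k l. w i) = \<dots>" .
        have "(\<theta> - \<mu>) * (c l - (\<Sum>i\<in>block n k l. \<alpha> i)) > 4 * s * (c l - (\<Sum>i\<in>block n k l. \<alpha> i))"
          using th a3 cl by (intro mult_strict_right_mono) auto
        moreover have "4 * s * (c l - (\<Sum>i\<in>block n k l. \<alpha> i)) \<ge> 4 * s * (c l / 2)"
          using a3 s by (intro mult_left_mono) auto
        ultimately have "(\<Sum>i\<in>block n k l. w i) > - (c l * s) + c l * \<mu> + 2 * s * c l"
          using eq ge by linarith
        then have "(\<Sum>i\<in>block n k l. w i) > c l * (\<mu> + s)" by (simp add: algebra_simps)
        then show "\<mu> + s < (\<Sum>i\<in>block n k l. w i) / real (card (block n k l))"
          using cl by (simp add: c_def pos_less_divide_eq mult.commute)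
      qed
      have "card {l\<in>{1..k}. \<not> (\<Sum>i\<in>block n k l. \<alpha> i * (x i - \<mu>)) < - (c l * s)}
          + card {l\<in>{1..k}. (\<Sum>i\<in>block n k l. \<alpha> i * (x i - \<mu>)) < - (c l * s)} = k"
      proof -
        have "{l\<in>{1..k}. \<not> (\<Sum>i\<in>block n k l. \<alpha> i * (x i - \<mu>)) < - (c l * s)}
          \<union> {l\<in>{1..k}. (\<Sum>i\<in>block n k l. \<alpha> i * (x i - \<mu>)) < - (c l * s)} = {1..k}" by auto
        then show ?thesis by (subst card_Un_disjoint[symmetric]) auto
      qed
      then have "k < 2 * card {l\<in>{1..k}. (\<Sum>i\<in>block n k l. w i) / real (card (block n k l)) > \<mu> + s}"
        using C2 card_mono[OF _ sub] by fastforce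
      then have "mom n k w > \<mu> + s" unfolding mom_def by (intro med_le k)
      then show False using le mx by linarith
    qed
  qed
qed



lemma (in prob_space) sum_tail:
  fixes W :: "'i \<Rightarrow> 'a \<Rightarrow> real"
  assumes B: "finite B" and L: "L > 0" and a: "0 \<le> a" "a \<le> 1"
  and meas: "\<And>i. i \<in> B \<Longrightarrow> W i \<in> borel_measurable M"
  and ind: "indep_vars (\<lambda>_. borel) (\<lambda>i \<omega>. if \<bar>W i \<omega>\<bar> \<le> L then W i \<omega> else 0) B"
  and mean0: "\<And>i. i \<in> B \<Longrightarrow> expectation (\<lambda>\<omega>. if \<bar>W i \<omega>\<bar> \<le> L then W i \<omega> else 0) = 0"
  and intm: "\<And>i. i \<in> B \<Longrightarrow> integrable M (\<lambda>\<omega>. \<bar>W i \<omega>\<bar> powr (1+a))"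
  and mom: "\<And>i. i \<in> B \<Longrightarrow> expectation (\<lambda>\<omega>. \<bar>W i \<omega>\<bar> powr (1+a)) \<le> Mm"
  shows "prob {\<omega>\<in>space M. \<bar>\<Sum>i\<in>B. W i \<omega>\<bar> > L} \<le> 2 * real (card B) * Mm / L powr (1+a)"
proof -
  define T where "T i \<omega> = (if \<bar>W i \<omega>\<bar> \<le> L then W i \<omega> else 0)" for i \<omega>
  have Tm: "T i \<in> borel_measurable M" if "i \<in> B" for i
    using meas[OF that] unfolding T_def by measurable
  have Tb: "\<bar>T i \<omega>\<bar> \<le> L" for i \<omega> unfolding T_def using L by auto
  have Tint: "integrable M (T i)" if "i \<in> B" for i
    by (rule integrable_const_bound[where B=L]) (auto simp: Tb Tm that)
  have TTint: "integrable M (\<lambda>\<omega>. T i \<omega> * T j \<omega>)" if "i \<in> B" "j \<in> B" for i j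
    by (rule integrable_const_bound[where B="L*L"])
       (auto simp: abs_mult intro!: mult_mono Tb borel_measurable_times Tm that AE_I2 less_imp_le[OF L])
  have Wm: "{\<omega>\<in>space M. \<bar>W i \<omega>\<bar> > L} \<in> sets M" if "i \<in> B" for i
    using meas[OF that] by measurable
  have Sm: "(\<lambda>\<omega>. \<Sum>i\<in>B. T i \<omega>) \<in> borel_measurable M"
    using Tm by (intro borel_measurable_sum) auto
  have Sm': "{\<omega>\<in>space M. \<bar>\<Sum>i\<in>B. T i \<omega>\<bar> \<ge> L} \<in> sets M"
    using Sm by measurable
  have U: "(\<Union>i\<in>B. {\<omega>\<in>space M. \<bar>W i \<omega>\<bar> > L}) \<in> sets M"
    using Wm B by (intro sets.finite_UN) auto
  have sub: "{\<omega>\<in>space M. \<bar>\<Sum>i\<in>B. W i \<omega>\<bar> > L} \<subseteq>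
      (\<Union>i\<in>B. {\<omega>\<in>space M. \<bar>W i \<omega>\<bar> > L}) \<union> {\<omega>\<in>space M. \<bar>\<Sum>i\<in>B. T i \<omega>\<bar> \<ge> L}"
  proof
    fix \<omega> assume h: "\<omega> \<in> {\<omega>\<in>space M. \<bar>\<Sum>i\<in>B. W i \<omega>\<bar> > L}"
    show "\<omega> \<in> (\<Union>i\<in>B. {\<omega>\<in>space M. \<bar>W i \<omega>\<bar> > L}) \<union> {\<omega>\<in>space M. \<bar>\<Sum>i\<in>B. T i \<omega>\<bar> \<ge> L}"
    proof (cases "\<forall>i\<in>B. \<bar>W i \<omega>\<bar> \<le> L")
      case True
      then have "(\<Sum>i\<in>B. W i \<omega>) = (\<Sum>i\<in>B. T i \<omega>)"
        unfolding T_def by (intro sum.cong) auto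
      then show ?thesis using h by auto
    next
      case False
      then show ?thesis using h by (auto simp: not_le)
    qed
  qed
  have "prob {\<omega>\<in>space M. \<bar>\<Sum>i\<in>B. W i \<omega>\<bar> > L} \<le>
      prob ((\<Union>i\<in>B. {\<omega>\<in>space M. \<bar>W i \<omega>\<bar> > L}) \<union> {\<omega>\<in>space M. \<bar>\<Sum>i\<in>B. T i \<omega>\<bar> \<ge> L})"
    using U Sm' by (intro finite_measure_mono[OF sub] sets.Un)
  also have "\<dots> \<le> prob (\<Union>i\<in>B. {\<omega>\<in>space M. \<bar>W i \<omega>\<bar> > L}) + prob {\<omega>\<in>space M. \<bar>\<Sum>i\<in>B. T i \<omega>\<bar> \<ge> L}"
    by (rule measure_Un_le[OF U Sm'])
  also have "prob (\<Union>i\<in>B. {\<omega>\<in>space M. \<bar>W i \<omega>\<bar> > L}) \<le> (\<Sum>i\<in>B. prob {\<omega>\<in>space M. \<bar>W i \<omega>\<bar> > L})"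
    using Wm B by (intro measure_UNION_le) auto
  also have "\<dots> \<le> (\<Sum>i\<in>B. Mm / L powr (1+a))"
  proof (rule sum_mono)
    fix i assume i: "i \<in> B"
    have "{\<omega>\<in>space M. \<bar>W i \<omega>\<bar> > L} \<subseteq> {\<omega>\<in>space M. \<bar>W i \<omega>\<bar> powr (1+a) \<ge> L powr (1+a)}"
      using L a by (auto intro!: powr_mono2)
    then have "prob {\<omega>\<in>space M. \<bar>W i \<omega>\<bar> > L} \<le> prob {\<omega>\<in>space M. \<bar>W i \<omega>\<bar> powr (1+a) \<ge> L powr (1+a)}"
      using meas[OF i] by (intro finite_measure_mono) measurable
    also have "\<dots> \<le> expectation (\<lambda>\<omega>. \<bar>W i \<omega>\<bar> powr (1+a)) / L powr (1+a)"
      using L by (intro integral_Markov_inequality_measure[where A="{}"] intm i) auto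
    also have "\<dots> \<le> Mm / L powr (1+a)"
      using L mom[OF i] by (intro divide_right_mono) auto
    finally show "prob {\<omega>\<in>space M. \<bar>W i \<omega>\<bar> > L} \<le> Mm / L powr (1+a)" .
  qed
  also have "prob {\<omega>\<in>space M. \<bar>\<Sum>i\<in>B. T i \<omega>\<bar> \<ge> L} \<le> expectation (\<lambda>\<omega>. (\<Sum>i\<in>B. T i \<omega>)^2) / L\<^sup>2"
  proof (rule second_moment_method[OF Sm _ L])
    show "integrable M (\<lambda>\<omega>. (\<Sum>i\<in>B. T i \<omega>)^2)"
      unfolding power2_eq_square sum_product using B by (auto intro!: integrable_sum TTint)
  qed
  also have "expectation (\<lambda>\<omega>. (\<Sum>i\<in>B. T i \<omega>)^2) = (\<Sum>i\<in>B. \<Sum>j\<in>B. expectation (\<lambda>\<omega>. T i \<omega> * T j \<omega>))"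
    unfolding power2_eq_square sum_product using B
    by (simp add: TTint integrable_sum)
  also have "\<dots> = (\<Sum>i\<in>B. expectation (\<lambda>\<omega>. T i \<omega> * T i \<omega>))"
  proof (rule sum.cong[OF refl])
    fix i assume i: "i \<in> B"
    have "(\<Sum>j\<in>B. expectation (\<lambda>\<omega>. T i \<omega> * T j \<omega>)) =
        (\<Sum>j\<in>B. if j = i then expectation (\<lambda>\<omega>. T i \<omega> * T i \<omega>) else 0)"
    proof (rule sum.cong[OF refl])
      fix j assume j: "j \<in> B"
      show "expectation (\<lambda>\<omega>. T i \<omega> * T j \<omega>) = (if j = i then expectation (\<lambda>\<omega>. T i \<omega> * T i \<omega>) else 0)"
      proof (cases "j = i")
        case False
        have ind2: "indep_vars (\<lambda>_. borel) T {i, j}"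
          unfolding T_def[abs_def] by (rule indep_vars_subset[OF ind]) (use i j in auto)
        have "expectation (\<lambda>\<omega>. \<Prod>m\<in>{i,j}. T m \<omega>) = (\<Prod>m\<in>{i,j}. expectation (T m))"
          using i j by (intro indep_vars_lebesgue_integral ind2 Tint) auto
        then show ?thesis using False mean0[OF i] i unfolding T_def by simp
      qed simp
    qed
    also have "\<dots> = expectation (\<lambda>\<omega>. T i \<omega> * T i \<omega>)" using B i by simp
    finally show "(\<Sum>j\<in>B. expectation (\<lambda>\<omega>. T i \<omega> * T j \<omega>)) = expectation (\<lambda>\<omega>. T i \<omega> * T i \<omega>)" .
  qed
  also have "\<dots> \<le> (\<Sum>i\<in>B. Mm * L powr (1-a))"
  proof (rule sum_mono)
    fix i assume i: "i \<in> B"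
    have pw: "T i \<omega> * T i \<omega> \<le> \<bar>W i \<omega>\<bar> powr (1+a) * L powr (1-a)" for \<omega>
    proof (cases "\<bar>W i \<omega>\<bar> \<le> L")
      case True
      have "T i \<omega> * T i \<omega> = \<bar>W i \<omega>\<bar> powr 2"
        using True unfolding T_def by (simp add: power2_eq_square)
      also have "\<dots> = \<bar>W i \<omega>\<bar> powr (1+a) * \<bar>W i \<omega>\<bar> powr (1-a)"
        by (simp add: powr_add[symmetric])
      also have "\<dots> \<le> \<bar>W i \<omega>\<bar> powr (1+a) * L powr (1-a)"
        using True a by (intro mult_left_mono powr_mono2) auto
      finally show ?thesis .
    qed (auto simp: T_def)
    have "expectation (\<lambda>\<omega>. T i \<omega> * T i \<omega>) \<le> expectation (\<lambda>\<omega>. \<bar>W i \<omega>\<bar> powr (1+a) * L powr (1-a))"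
      using pw i by (intro integral_mono TTint integrable_mult_left intm) auto
    also have "\<dots> = expectation (\<lambda>\<omega>. \<bar>W i \<omega>\<bar> powr (1+a)) * L powr (1-a)" by simp
    also have "\<dots> \<le> Mm * L powr (1-a)" using mom[OF i] by (intro mult_right_mono) auto
    finally show "expectation (\<lambda>\<omega>. T i \<omega> * T i \<omega>) \<le> Mm * L powr (1-a)" .
  qed
  finally have fin: "prob {\<omega>\<in>space M. \<bar>\<Sum>i\<in>B. W i \<omega>\<bar> > L} \<le>
     real (card B) * (Mm / L powr (1+a)) + real (card B) * (Mm * L powr (1-a)) / L\<^sup>2"
    by (simp add: divide_right_mono)
  have eq: "Mm * L powr (1-a) / L\<^sup>2 = Mm / L powr (1+a)"
  proof -
    have "L\<^sup>2 = L powr (1+a) * L powr (1-a)" using L by (simp add: powr_add[symmetric])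
    then show ?thesis using L by (simp add: field_simps)
  qed
  have "real (card B) * (Mm * L powr (1-a)) / L\<^sup>2 = real (card B) * (Mm / L powr (1+a))"
    by (metis eq times_divide_eq_right)
  then show ?thesis using fin by (simp add: algebra_simps)
qed



lemma (in prob_space) indep_group:
  assumes ind: "indep_vars (\<lambda>_. borel) Z I"
  and K: "\<And>l. l \<in> L \<Longrightarrow> K l \<subseteq> I"
  and disj: "disjoint_family_on K L"
  and g: "\<And>l. l \<in> L \<Longrightarrow> g l \<in> borel_measurable (PiM (K l) (\<lambda>_. borel))"
  and eq: "\<And>l \<omega>. l \<in> L \<Longrightarrow> Y l \<omega> = g l (restrict (\<lambda>j. Z j \<omega>) (K l))"
  shows "indep_vars (\<lambda>_. borel) Y L"
proof -
  have "indep_vars (\<lambda>_. borel) (\<lambda>l \<omega>. g l (restrict (\<lambda>j. Z j \<omega>) (K l))) L"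
    by (rule indep_vars_compose2[OF indep_vars_restrict[OF ind K disj]]) (use g in auto)
  then show ?thesis
    by (rule indep_vars_cong[THEN iffD1, rotated 3]) (auto simp: eq fun_eq_iff)
qed

lemma (in prob_space) hoeff:
  assumes "finite I" "indep_vars (\<lambda>_. borel) X I" "\<And>i. i \<in> I \<Longrightarrow> AE x in M. X i x \<in> {a i..b i}"
    "\<epsilon> \<ge> 0" "(\<Sum>i\<in>I. (b i - a i)\<^sup>2) > 0"
  shows "prob {x\<in>space M. (\<Sum>i\<in>I. X i x) \<ge> (\<Sum>i\<in>I. expectation (X i)) + \<epsilon>}
     \<le> exp (-2 * \<epsilon>\<^sup>2 / (\<Sum>i\<in>I. (b i - a i)\<^sup>2))"
proof -
  interpret H: Hoeffding_ineq M I X a b "\<Sum>i\<in>I. expectation (X i)"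
    by unfold_locales (use assms in auto)
  show ?thesis by (rule H.Hoeffding_ineq_ge) (use assms in auto)
qed

lemma (in prob_space) count_bound:
  fixes P :: "'i \<Rightarrow> 'a \<Rightarrow> bool"
  assumes I: "finite I" "card I = k" "k > 0"
  and ind: "indep_vars (\<lambda>_. borel) (\<lambda>l \<omega>. of_bool (P l \<omega>) :: real) I"
  and Pm: "\<And>l. l \<in> I \<Longrightarrow> {\<omega>\<in>space M. P l \<omega>} \<in> sets M"
  and Pp: "\<And>l. l \<in> I \<Longrightarrow> prob {\<omega>\<in>space M. P l \<omega>} \<le> 1/6"
  shows "prob {\<omega>\<in>space M. real k \<le> 2 * (\<Sum>l\<in>I. of_bool (P l \<omega>))} \<le> exp (- real k / 8)"
proof -
  define Y where "Y l \<omega> = (of_bool (P l \<omega>) :: real)" for l \<omega>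
  have E: "expectation (Y l) = prob {\<omega>\<in>space M. P l \<omega>}" if "l \<in> I" for l
  proof -
    have "expectation (Y l) = expectation (indicator {\<omega>\<in>space M. P l \<omega>})"
      unfolding Y_def by (intro Bochner_Integration.integral_cong) (auto simp: indicator_def)
    also have "\<dots> = prob {\<omega>\<in>space M. P l \<omega>}" using Pm[OF that] by simp
    finally show ?thesis .
  qed
  define mu where "mu = (\<Sum>l\<in>I. expectation (Y l))"
  have mu: "mu \<le> real k / 6"
  proof -
    have "mu \<le> (\<Sum>l\<in>I. 1/6)" unfolding mu_def using E Pp by (intro sum_mono) auto
    then show ?thesis using I by simp
  qed
  define \<epsilon> where "\<epsilon> = real k / 2 - mu"
  have eps: "\<epsilon> \<ge> real k / 3" using mu unfolding \<epsilon>_def by simp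
  have "prob {\<omega>\<in>space M. real k \<le> 2 * (\<Sum>l\<in>I. of_bool (P l \<omega>))}
     = prob {\<omega>\<in>space M. (\<Sum>l\<in>I. Y l \<omega>) \<ge> mu + \<epsilon>}"
    unfolding \<epsilon>_def Y_def by (intro arg_cong[where f=prob]) auto
  also have "\<dots> \<le> exp (-2 * \<epsilon>\<^sup>2 / (\<Sum>l\<in>I. (1 - 0)\<^sup>2))"
    unfolding mu_def using I eps ind unfolding Y_def
    by (intro hoeff[where a="\<lambda>_. 0" and b="\<lambda>_. 1"]) (auto intro!: AE_I2)
  also have "\<dots> = exp (-2 * \<epsilon>\<^sup>2 / real k)" using I by simp
  also have "\<dots> \<le> exp (- real k / 8)"
  proof -
    have "(real k / 3)\<^sup>2 \<le> \<epsilon>\<^sup>2" using eps by (intro power_mono) auto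
    then have "real k * real k \<le> 9 * \<epsilon>\<^sup>2" by (simp add: power2_eq_square)
    moreover have "0 \<le> \<epsilon>\<^sup>2" by simp
    ultimately have "real k * real k / 8 \<le> 2 * \<epsilon>\<^sup>2" by linarith
    then have "real k / 8 \<le> 2 * \<epsilon>\<^sup>2 / real k" using I by (simp add: field_simps)
    then show ?thesis by simp
  qed
  finally show ?thesis .
qed

lemma (in prob_space) alpha_block:
  fixes \<alpha> :: "nat \<Rightarrow> 'a \<Rightarrow> real"
  assumes B: "finite B" "card B = c" "c > 0"
  and ind: "indep_vars (\<lambda>_. borel) \<alpha> B"
  and AEa: "\<And>i. i \<in> B \<Longrightarrow> AE \<omega> in M. \<alpha> i \<omega> \<in> {-1..1}"
  and Ea: "\<And>i. i \<in> B \<Longrightarrow> expectation (\<alpha> i) = 0"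
  shows "prob {\<omega>\<in>space M. (\<Sum>i\<in>B. \<alpha> i \<omega>) \<ge> real c / 2} \<le> exp (- real c / 8)"
proof -
  have "prob {\<omega>\<in>space M. (\<Sum>i\<in>B. \<alpha> i \<omega>) \<ge> real c / 2} =
      prob {\<omega>\<in>space M. (\<Sum>i\<in>B. \<alpha> i \<omega>) \<ge> (\<Sum>i\<in>B. expectation (\<alpha> i)) + real c / 2}"
    using Ea by simp
  also have "\<dots> \<le> exp (-2 * (real c / 2)\<^sup>2 / (\<Sum>i\<in>B. (1 - (-1))\<^sup>2))"
    using B ind AEa by (intro hoeff[where a="\<lambda>_. -1" and b="\<lambda>_. 1"]) auto
  also have "\<dots> = exp (- real c / 8)" using B by (simp add: power2_eq_square field_simps)
  finally show ?thesis .
qed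



lemma (in prob_space) AE_zero_sum:
  fixes W :: "nat \<Rightarrow> 'a \<Rightarrow> real"
  assumes "finite B" "\<And>i. i \<in> B \<Longrightarrow> AE \<omega> in M. W i \<omega> = 0"
    "{\<omega>\<in>space M. Q (\<Sum>i\<in>B. W i \<omega>)} \<in> sets M" "\<not> Q 0"
  shows "prob {\<omega>\<in>space M. Q (\<Sum>i\<in>B. W i \<omega>)} = 0"
proof -
  have "AE \<omega> in M. \<forall>i\<in>B. W i \<omega> = 0" using assms(1,2) by (simp add: AE_finite_all)
  then have "AE \<omega> in M. \<omega> \<notin> {\<omega>\<in>space M. Q (\<Sum>i\<in>B. W i \<omega>)}"
    by eventually_elim (use assms(4) in auto)
  then have "{\<omega>\<in>space M. Q (\<Sum>i\<in>B. W i \<omega>)} \<in> null_sets M"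
    using AE_iff_null_sets assms(3) by blast
  then show ?thesis by (simp add: measure_def null_sets_def)
qed

lemma tail_arith:
  fixes c s Mm a nt :: real
  assumes c: "c \<ge> nt" "nt \<ge> 1" and a: "0 < a" and Mm: "Mm > 0"
  and s: "s = (12*Mm) powr (1/(1+a)) * (1/nt) powr (a/(1+a))"
  shows "2 * c * Mm / (c * s) powr (1+a) \<le> 1/6"
proof -
  have spow: "s powr (1+a) = 12 * Mm * (1/nt) powr a"
  proof -
    have "s powr (1+a) = ((12*Mm) powr (1/(1+a))) powr (1+a) * ((1/nt) powr (a/(1+a))) powr (1+a)"
      unfolding s using Mm c by (simp add: powr_mult)
    also have "\<dots> = 12 * Mm * (1/nt) powr a"
      using a Mm c by (simp add: powr_powr)
    finally show ?thesis .
  qed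
  have cpos: "c > 0" using c by simp
  have "(c * s) powr (1+a) = c powr (1+a) * s powr (1+a)"
    using cpos s Mm c by (simp add: powr_mult)
  also have "\<dots> = c * c powr a * (12 * Mm / nt powr a)"
  proof -
    have "c powr (1+a) = c * c powr a" using cpos by (simp add: powr_add)
    moreover have "(1/nt) powr a = 1 / nt powr a" using c by (simp add: powr_divide)
    ultimately show ?thesis by (simp add: spow)
  qed
  also have "\<dots> \<ge> c * nt powr a * (12 * Mm / nt powr a)"
    using c a Mm by (intro mult_right_mono mult_left_mono powr_mono2) auto
  also have "c * nt powr a * (12 * Mm / nt powr a) = 12 * c * Mm"
    using c by simp
  finally have le: "12 * c * Mm \<le> (c * s) powr (1+a)" .
  have "2 * c * Mm / (c * s) powr (1+a) \<le> 2 * c * Mm / (12 * c * Mm)"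
  proof (rule divide_left_mono)
    have p1: "0 < 12 * c * Mm" using cpos Mm by simp
    then have "0 < (c * s) powr (1 + a)" using le by linarith
    then show "0 < (c * s) powr (1 + a) * (12 * c * Mm)" using p1 by (rule mult_pos_pos)
  qed (use cpos Mm le in auto)
  also have "\<dots> = 1/6" using cpos Mm by simp
  finally show ?thesis .
qed



lemma ereal_aux:
  fixes U :: ereal
  assumes "U \<le> ereal (m + t)" shows "\<not> (U - ereal m > ereal t)"
  using assms by (cases U) auto

theorem theorem6:
  fixes M :: "'a measure" and X \<alpha> :: "nat \<Rightarrow> 'a \<Rightarrow> real" and p :: "'a \<Rightarrow> bool"
    and n k :: nat and \<mu> a Mm :: real
  assumes "prob_space M"
    and indep: "prob_space.indep_vars M (\<lambda>_. borel)
           (\<lambda>j \<omega>. case j of Inl i \<Rightarrow> X i \<omega> | Inr (Inl i) \<Rightarrow> \<alpha> i \<omega> | Inr (Inr u) \<Rightarrow> of_bool (p \<omega>))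
           (Inl ` {1..n} \<union> Inr ` Inl ` {1..n} \<union> {Inr (Inr ())})"
    and ident: "\<And>i. i \<in> {1..n} \<Longrightarrow> distr M borel (X i) = distr M borel (X 1)"
    and symm: "distr M borel (\<lambda>\<omega>. X 1 \<omega> - \<mu>) = distr M borel (\<lambda>\<omega>. \<mu> - X 1 \<omega>)"
    and a: "0 < a" "a \<le> 1"
    and int1: "integrable M (X 1)"
    and intm: "integrable M (\<lambda>\<omega>. \<bar>X 1 \<omega> - prob_space.expectation M (X 1)\<bar> powr (1 + a))"
    and mom: "prob_space.expectation M (\<lambda>\<omega>. \<bar>X 1 \<omega> - prob_space.expectation M (X 1)\<bar> powr (1 + a)) = Mm"
    and rad: "\<And>i. i \<in> {1..n} \<Longrightarrow> measure M {\<omega> \<in> space M. \<alpha> i \<omega> = 1} = 1/2"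
    and rad': "\<And>i. i \<in> {1..n} \<Longrightarrow> measure M {\<omega> \<in> space M. \<alpha> i \<omega> = -1} = 1/2"
    and pi: "measure M {\<omega> \<in> space M. p \<omega>} = 1/2"
    and k: "1 \<le> k" "k \<le> n"
  shows "outer_prob M {\<omega> \<in> space M.
           rmom_U n k (\<lambda>i. X i \<omega>) (\<lambda>i. \<alpha> i \<omega>) (p \<omega>) - ereal \<mu>
             > ereal (4 * (12 * Mm) powr (1 / (1 + a)) * (1 / real (n div k)) powr (a / (1 + a)))}
         \<le> 2 * real k * exp (- real (n div k) / 8) + 2 * exp (- real k / 8)"
proof -
  interpret prob_space M by fact
  define Z :: "nat + nat + unit \<Rightarrow> 'a \<Rightarrow> real" where
    "Z = (\<lambda>j \<omega>. case j of Inl i \<Rightarrow> X i \<omega> | Inr (Inl i) \<Rightarrow> \<alpha> i \<omega> | Inr (Inr u) \<Rightarrow> of_bool (p \<omega>))"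
  define I0 :: "(nat + nat + unit) set" where "I0 = Inl ` {1..n} \<union> Inr ` Inl ` {1..n} \<union> {Inr (Inr ())}"
  have indZ: "indep_vars (\<lambda>_. borel) Z I0" using indep unfolding Z_def I0_def .
  have rvZ: "Z j \<in> borel_measurable M" if "j \<in> I0" for j
    using indZ that unfolding indep_vars_def by auto
  have Xm[measurable]: "X i \<in> borel_measurable M" if "i \<in> {1..n}" for i
    using rvZ[of "Inl i"] that by (simp add: Z_def I0_def)
  have am[measurable]: "\<alpha> i \<in> borel_measurable M" if "i \<in> {1..n}" for i
    using rvZ[of "Inr (Inl i)"] that by (simp add: Z_def I0_def)
  have n1: "1 \<in> {1..n}" using k by auto
  note X1m[measurable] = Xm[OF n1]
  have X1m'[measurable]: "X (Suc 0) \<in> borel_measurable M" using X1m by simp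
  define nt where "nt = n div k"
  have nt1: "1 \<le> nt" unfolding nt_def using k by (simp add: div_greater_zero_iff Suc_le_eq)
  define s where "s = (12*Mm) powr (1/(1+a)) * (1/real nt) powr (a/(1+a))"
  have s0: "0 \<le> s" unfolding s_def by simp
  have EX1: "expectation (X 1) = \<mu>"
  proof -
    have "expectation (\<lambda>\<omega>. X 1 \<omega> - \<mu>) = integral\<^sup>L (distr M borel (\<lambda>\<omega>. X 1 \<omega> - \<mu>)) (\<lambda>x. x)"
      by (subst integral_distr) auto
    also have "\<dots> = integral\<^sup>L (distr M borel (\<lambda>\<omega>. \<mu> - X 1 \<omega>)) (\<lambda>x. x)" by (simp only: symm)
    also have "\<dots> = expectation (\<lambda>\<omega>. \<mu> - X 1 \<omega>)" by (subst integral_distr) auto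
    finally have "expectation (\<lambda>\<omega>. X 1 \<omega> - \<mu>) = expectation (\<lambda>\<omega>. \<mu> - X 1 \<omega>)" .
    then show ?thesis using int1 by (simp add: prob_space)
  qed
  have dX: "integrable M (\<lambda>\<omega>. f (X i \<omega>)) = integrable M (\<lambda>\<omega>. f (X 1 \<omega>)) \<and>
      expectation (\<lambda>\<omega>. f (X i \<omega>)) = expectation (\<lambda>\<omega>. f (X 1 \<omega>))"
    if i: "i \<in> {1..n}" and f: "f \<in> borel_measurable borel" for i and f :: "real \<Rightarrow> real"
  proof -
    have "integrable M (\<lambda>\<omega>. f (X i \<omega>)) = integrable (distr M borel (X i)) f"
      using i f by (subst integrable_distr_eq) auto
    also have "\<dots> = integrable (distr M borel (X 1)) f" using ident[OF i] by simp
    also have "\<dots> = integrable M (\<lambda>\<omega>. f (X 1 \<omega>))" using f by (subst integrable_distr_eq) auto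
    finally have 1: "integrable M (\<lambda>\<omega>. f (X i \<omega>)) = integrable M (\<lambda>\<omega>. f (X 1 \<omega>))" .
    have "expectation (\<lambda>\<omega>. f (X i \<omega>)) = integral\<^sup>L (distr M borel (X i)) f"
      using i f by (subst integral_distr) auto
    also have "\<dots> = integral\<^sup>L (distr M borel (X 1)) f" using ident[OF i] by simp
    also have "\<dots> = expectation (\<lambda>\<omega>. f (X 1 \<omega>))" using f by (subst integral_distr) auto
    finally show ?thesis using 1 by simp
  qed
  have momi: "integrable M (\<lambda>\<omega>. \<bar>X i \<omega> - \<mu>\<bar> powr (1+a)) \<and> expectation (\<lambda>\<omega>. \<bar>X i \<omega> - \<mu>\<bar> powr (1+a)) = Mm"
    if i: "i \<in> {1..n}" for i
    using dX[OF i, of "\<lambda>x. \<bar>x - \<mu>\<bar> powr (1+a)"] intm mom EX1 by simp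
  have Mm0: "0 \<le> Mm" using momi[OF n1] by (metis integral_nonneg_AE AE_I2 powr_ge_zero)
  define tr where "tr L v = (if \<bar>v\<bar> \<le> L then v else 0)" for L v :: real
  have trm[measurable]: "tr L \<in> borel_measurable borel" for L unfolding tr_def by measurable
  have trb: "\<bar>tr L v\<bar> \<le> \<bar>L\<bar>" for L v unfolding tr_def by auto
  have trint: "integrable M (\<lambda>\<omega>. tr L (f \<omega>))" if "f \<in> borel_measurable M" for f L
    by (rule integrable_const_bound[where B="\<bar>L\<bar>"]) (use that trb in auto)
  have tr0: "expectation (\<lambda>\<omega>. tr L (X i \<omega> - \<mu>)) = 0" if i: "i \<in> {1..n}" for i L
  proof -
    have "expectation (\<lambda>\<omega>. tr L (X 1 \<omega> - \<mu>)) = integral\<^sup>L (distr M borel (\<lambda>\<omega>. X 1 \<omega> - \<mu>)) (tr L)"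
      by (subst integral_distr) auto
    also have "\<dots> = integral\<^sup>L (distr M borel (\<lambda>\<omega>. \<mu> - X 1 \<omega>)) (tr L)" by (simp only: symm)
    also have "\<dots> = expectation (\<lambda>\<omega>. tr L (\<mu> - X 1 \<omega>))" by (subst integral_distr) auto
    also have "\<dots> = expectation (\<lambda>\<omega>. - tr L (X 1 \<omega> - \<mu>))"
      by (intro Bochner_Integration.integral_cong) (auto simp: tr_def)
    finally have "expectation (\<lambda>\<omega>. tr L (X 1 \<omega> - \<mu>)) = 0" by simp
    then show ?thesis using dX[OF i, of "\<lambda>x. tr L (x - \<mu>)"] by simp
  qed
  have aAE: "AE \<omega> in M. \<alpha> i \<omega> = 1 \<or> \<alpha> i \<omega> = -1" if i: "i \<in> {1..n}" for i
  proof -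
    have "prob ({\<omega>\<in>space M. \<alpha> i \<omega> = 1} \<union> {\<omega>\<in>space M. \<alpha> i \<omega> = -1}) =
        prob {\<omega>\<in>space M. \<alpha> i \<omega> = 1} + prob {\<omega>\<in>space M. \<alpha> i \<omega> = -1}"
      using i by (intro finite_measure_Union) auto
    also have "\<dots> = 1" using rad[OF i] rad'[OF i] by simp
    finally show ?thesis by (auto dest!: AE_prob_1)
  qed
  have aint: "integrable M (\<alpha> i)" if i: "i \<in> {1..n}" for i
    by (rule integrable_const_bound[where B=1]) (use aAE[OF i] i in \<open>auto elim!: eventually_mono\<close>)
  have aE: "expectation (\<alpha> i) = 0" if i: "i \<in> {1..n}" for i
  proof -
    have "expectation (\<alpha> i) = expectation (\<lambda>\<omega>. indicator {\<omega>\<in>space M. \<alpha> i \<omega> = 1} \<omega> - indicator {\<omega>\<in>space M. \<alpha> i \<omega> = -1} \<omega>)"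
      using i by (intro integral_cong_AE) (auto simp: indicator_def intro!: eventually_mono[OF aAE[OF i]])
    also have "\<dots> = 0" using i rad[OF i] rad'[OF i] by (subst Bochner_Integration.integral_diff) (auto intro!: integrable_real_indicator simp: less_top[symmetric])
    finally show ?thesis .
  qed
  define bl where "bl l = block n k l" for l
  define c where "c l = card (bl l)" for l
  have blsub: "bl l \<subseteq> {1..n}" "finite (bl l)" for l unfolding bl_def by (rule block_sub)+
  have cnt: "nt \<le> c l" if "l \<in> {1..k}" for l unfolding c_def bl_def nt_def using block_card that k by auto
  have cpos: "0 < c l" if "l \<in> {1..k}" for l using cnt[OF that] nt1 by simp
  have bldisj: "bl l \<inter> bl l' = {}" if "l \<in> {1..k}" "l' \<in> {1..k}" "l \<noteq> l'" for l l'
    unfolding bl_def using block_disj that by auto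
  have aXind: "expectation (\<lambda>\<omega>. \<alpha> i \<omega> * tr L (X i \<omega> - \<mu>)) = 0" if i: "i \<in> {1..n}" for i L
  proof -
    define Y where "Y l \<omega> = (if l = (0::nat) then \<alpha> i \<omega> else tr L (X i \<omega> - \<mu>))" for l \<omega>
    define K :: "nat \<Rightarrow> (nat+nat+unit) set" where "K l = (if l = (0::nat) then {Inr (Inl i)} else {Inl i})" for l
    define g where "g l f = (if l = (0::nat) then f (Inr (Inl i)) else tr L (f (Inl i) - \<mu>))" for l and f :: "nat+nat+unit \<Rightarrow> real"
    have ind: "indep_vars (\<lambda>_. borel) Y {0,1}"
    proof (rule indep_group[OF indZ])
      show "\<And>l. l \<in> {0,1} \<Longrightarrow> K l \<subseteq> I0" using i by (auto simp: K_def I0_def)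
      show "disjoint_family_on K {0,1}" by (auto simp: disjoint_family_on_def K_def)
      show "g l \<in> borel_measurable (PiM (K l) (\<lambda>_. borel))" if "l \<in> {0,1}" for l
        unfolding g_def K_def by (cases "l = 0") simp_all
      show "\<And>l \<omega>. l \<in> {0,1} \<Longrightarrow> Y l \<omega> = g l (restrict (\<lambda>j. Z j \<omega>) (K l))"
        by (auto simp: Y_def g_def K_def Z_def)
    qed
    have int: "integrable M (Y l)" if "l \<in> {0,1}" for l
    proof (cases "l = 0")
      case True
      then have "Y l = \<alpha> i" by (auto simp: Y_def fun_eq_iff)
      then show ?thesis using aint[OF i] by simp
    next
      case False
      then have "Y l = (\<lambda>\<omega>. tr L (X i \<omega> - \<mu>))" by (auto simp: Y_def fun_eq_iff)
      then show ?thesis using i by (simp add: trint)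
    qed
    have "expectation (\<lambda>\<omega>. \<Prod>l\<in>{0,1}. Y l \<omega>) = (\<Prod>l\<in>{0,1}. expectation (Y l))"
      by (rule indep_vars_lebesgue_integral[OF _ ind int]) auto
    moreover have "Y 0 = \<alpha> i" by (auto simp: Y_def fun_eq_iff)
    ultimately show ?thesis using aE[OF i] by (simp add: Y_def)
  qed
  have sumM: "(\<lambda>\<omega>. \<Sum>i\<in>bl l. h (X i \<omega>) (\<alpha> i \<omega>)) \<in> borel_measurable M"
    if h[measurable]: "(\<lambda>(x, y). h x y) \<in> borel_measurable (borel \<Otimes>\<^sub>M borel)" for l and h :: "real \<Rightarrow> real \<Rightarrow> real"
  proof (rule borel_measurable_sum)
    fix i assume "i \<in> bl l"
    then have i: "i \<in> {1..n}" using blsub(1)[of l] by blast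
    note [measurable] = Xm[OF i] am[OF i]
    show "(\<lambda>\<omega>. h (X i \<omega>) (\<alpha> i \<omega>)) \<in> borel_measurable M" by measurable
  qed
  have SX[measurable]: "(\<lambda>\<omega>. \<Sum>i\<in>bl l. X i \<omega> - \<mu>) \<in> borel_measurable M" for l
    using sumM[of "\<lambda>x y. x - \<mu>" l] by measurable
  have SA[measurable]: "(\<lambda>\<omega>. \<Sum>i\<in>bl l. \<alpha> i \<omega> * (X i \<omega> - \<mu>)) \<in> borel_measurable M" for l
    using sumM[of "\<lambda>x y. y * (x - \<mu>)" l] by measurable
  have SAl[measurable]: "(\<lambda>\<omega>. \<Sum>i\<in>bl l. \<alpha> i \<omega>) \<in> borel_measurable M" for l
    using sumM[of "\<lambda>x y. y" l] by measurable
  have y0: "AE \<omega> in M. X i \<omega> - \<mu> = 0" if i: "i \<in> {1..n}" and Mz: "Mm = 0" for i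
  proof -
    have "AE \<omega> in M. \<bar>X i \<omega> - \<mu>\<bar> powr (1+a) = 0"
      using momi[OF i] Mz by (subst integral_nonneg_eq_0_iff_AE[symmetric]) auto
    then show ?thesis by eventually_elim simp
  qed
  have tail1: "prob {\<omega>\<in>space M. (\<Sum>i\<in>bl l. X i \<omega> - \<mu>) > c l * s} \<le> 1/6" if l: "l \<in> {1..k}" for l
  proof (cases "Mm = 0")
    case True
    have "prob {\<omega>\<in>space M. (\<Sum>i\<in>bl l. X i \<omega> - \<mu>) > c l * s} = 0"
    proof (rule AE_zero_sum[where Q="\<lambda>v. v > c l * s" and W="\<lambda>i \<omega>. X i \<omega> - \<mu>"])
      show "AE \<omega> in M. X i \<omega> - \<mu> = 0" if "i \<in> bl l" for i
        using y0[OF _ True, of i] blsub(1)[of l] that by blast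
      show "\<not> 0 > c l * s" using s0 by (simp add: not_less)
    qed (auto simp: blsub)
    then show ?thesis by simp
  next
    case False
    then have Mp: "Mm > 0" using Mm0 by simp
    have sp: "s > 0" unfolding s_def using Mp nt1 by simp
    define L where "L = c l * s"
    have Lp: "L > 0" unfolding L_def using sp cpos[OF l] by simp
    have "prob {\<omega>\<in>space M. (\<Sum>i\<in>bl l. X i \<omega> - \<mu>) > c l * s} \<le>
        prob {\<omega>\<in>space M. \<bar>\<Sum>i\<in>bl l. X i \<omega> - \<mu>\<bar> > L}"
      unfolding L_def by (intro finite_measure_mono) auto
    also have "\<dots> \<le> 2 * real (card (bl l)) * Mm / L powr (1+a)"
    proof (rule sum_tail[OF blsub(2) Lp _ a(2)])
      show "0 \<le> a" using a by simp
      fix i assume "i \<in> bl l"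
      then have i: "i \<in> {1..n}" using blsub(1)[of l] by blast
      show "(\<lambda>\<omega>. X i \<omega> - \<mu>) \<in> borel_measurable M" using Xm[OF i] by measurable
      show "expectation (\<lambda>\<omega>. if \<bar>X i \<omega> - \<mu>\<bar> \<le> L then X i \<omega> - \<mu> else 0) = 0"
        using tr0[OF i, of L] by (simp add: tr_def)
      show "integrable M (\<lambda>\<omega>. \<bar>X i \<omega> - \<mu>\<bar> powr (1+a))" using momi[OF i] by simp
      show "expectation (\<lambda>\<omega>. \<bar>X i \<omega> - \<mu>\<bar> powr (1+a)) \<le> Mm" using momi[OF i] by simp
    next
      define K :: "nat \<Rightarrow> (nat+nat+unit) set" where "K i = {Inl i}" for i
      define g where "g i f = tr L (f (Inl i) - \<mu>)" for i and f :: "nat+nat+unit \<Rightarrow> real"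
      show "indep_vars (\<lambda>_. borel) (\<lambda>i \<omega>. if \<bar>X i \<omega> - \<mu>\<bar> \<le> L then X i \<omega> - \<mu> else 0) (bl l)"
      proof (rule indep_group[OF indZ])
        show "\<And>i. i \<in> bl l \<Longrightarrow> K i \<subseteq> I0" using blsub(1)[of l] by (auto simp: K_def I0_def)
        show "disjoint_family_on K (bl l)" by (auto simp: disjoint_family_on_def K_def)
        show "g i \<in> borel_measurable (PiM (K i) (\<lambda>_. borel))" for i
          unfolding g_def K_def by measurable
        show "\<And>i \<omega>. i \<in> bl l \<Longrightarrow> (if \<bar>X i \<omega> - \<mu>\<bar> \<le> L then X i \<omega> - \<mu> else 0) = g i (restrict (\<lambda>j. Z j \<omega>) (K i))"
          by (auto simp: g_def K_def Z_def tr_def)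
      qed
    qed
    also have "\<dots> \<le> 1/6"
      unfolding L_def c_def[symmetric] using cnt[OF l] nt1 a Mp
      by (intro tail_arith[where nt="real nt"]) (auto simp: s_def)
    finally show ?thesis .
  qed
  have tail2: "prob {\<omega>\<in>space M. (\<Sum>i\<in>bl l. \<alpha> i \<omega> * (X i \<omega> - \<mu>)) < - (c l * s)} \<le> 1/6" if l: "l \<in> {1..k}" for l
  proof (cases "Mm = 0")
    case True
    have "prob {\<omega>\<in>space M. (\<Sum>i\<in>bl l. \<alpha> i \<omega> * (X i \<omega> - \<mu>)) < - (c l * s)} = 0"
    proof (rule AE_zero_sum[where Q="\<lambda>v. v < - (c l * s)" and W="\<lambda>i \<omega>. \<alpha> i \<omega> * (X i \<omega> - \<mu>)"])
      show "AE \<omega> in M. \<alpha> i \<omega> * (X i \<omega> - \<mu>) = 0" if "i \<in> bl l" for i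
      proof -
        have "AE \<omega> in M. X i \<omega> - \<mu> = 0"
          using y0[OF _ True, of i] blsub(1)[of l] that by blast
        then show ?thesis by eventually_elim simp
      qed
      show "\<not> 0 < - (c l * s)" using s0 by (simp add: not_less)
    qed (auto simp: blsub)
    then show ?thesis by simp
  next
    case False
    then have Mp: "Mm > 0" using Mm0 by simp
    have sp: "s > 0" unfolding s_def using Mp nt1 by simp
    define L where "L = c l * s"
    have Lp: "L > 0" unfolding L_def using sp cpos[OF l] by simp
    have "prob {\<omega>\<in>space M. (\<Sum>i\<in>bl l. \<alpha> i \<omega> * (X i \<omega> - \<mu>)) < - (c l * s)} \<le>
        prob {\<omega>\<in>space M. \<bar>\<Sum>i\<in>bl l. \<alpha> i \<omega> * (X i \<omega> - \<mu>)\<bar> > L}"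
      unfolding L_def by (intro finite_measure_mono) auto
    also have "\<dots> \<le> 2 * real (card (bl l)) * Mm / L powr (1+a)"
    proof (rule sum_tail[OF blsub(2) Lp _ a(2)])
      show "0 \<le> a" using a by simp
      fix i assume "i \<in> bl l"
      then have i: "i \<in> {1..n}" using blsub(1)[of l] by blast
      note [measurable] = Xm[OF i] am[OF i]
      show "(\<lambda>\<omega>. \<alpha> i \<omega> * (X i \<omega> - \<mu>)) \<in> borel_measurable M" by measurable
      have "expectation (\<lambda>\<omega>. if \<bar>\<alpha> i \<omega> * (X i \<omega> - \<mu>)\<bar> \<le> L then \<alpha> i \<omega> * (X i \<omega> - \<mu>) else 0)
          = expectation (\<lambda>\<omega>. \<alpha> i \<omega> * tr L (X i \<omega> - \<mu>))"
        by (intro integral_cong_AE) (measurable, auto simp: tr_def intro!: eventually_mono[OF aAE[OF i]])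
      then show "expectation (\<lambda>\<omega>. if \<bar>\<alpha> i \<omega> * (X i \<omega> - \<mu>)\<bar> \<le> L then \<alpha> i \<omega> * (X i \<omega> - \<mu>) else 0) = 0"
        using aXind[OF i, of L] by simp
      have AEp: "AE \<omega> in M. \<bar>\<alpha> i \<omega> * (X i \<omega> - \<mu>)\<bar> powr (1+a) = \<bar>X i \<omega> - \<mu>\<bar> powr (1+a)"
        by (auto intro!: eventually_mono[OF aAE[OF i]] simp: abs_minus_commute)
      show "integrable M (\<lambda>\<omega>. \<bar>\<alpha> i \<omega> * (X i \<omega> - \<mu>)\<bar> powr (1+a))"
      proof -
        have "integrable M (\<lambda>\<omega>. \<bar>\<alpha> i \<omega> * (X i \<omega> - \<mu>)\<bar> powr (1+a)) = integrable M (\<lambda>\<omega>. \<bar>X i \<omega> - \<mu>\<bar> powr (1+a))"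
          by (rule integrable_cong_AE[OF _ _ AEp]) measurable
        then show ?thesis using momi[OF i] by simp
      qed
      have "expectation (\<lambda>\<omega>. \<bar>\<alpha> i \<omega> * (X i \<omega> - \<mu>)\<bar> powr (1+a)) = expectation (\<lambda>\<omega>. \<bar>X i \<omega> - \<mu>\<bar> powr (1+a))"
        by (rule integral_cong_AE[OF _ _ AEp]) measurable
      then have "expectation (\<lambda>\<omega>. \<bar>\<alpha> i \<omega> * (X i \<omega> - \<mu>)\<bar> powr (1+a)) = Mm"
        using momi[OF i] by simp
      then show "expectation (\<lambda>\<omega>. \<bar>\<alpha> i \<omega> * (X i \<omega> - \<mu>)\<bar> powr (1+a)) \<le> Mm" by simp
    next
      define K :: "nat \<Rightarrow> (nat+nat+unit) set" where "K i = {Inl i, Inr (Inl i)}" for i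
      define g where "g i f = tr L (f (Inr (Inl i)) * (f (Inl i) - \<mu>))" for i and f :: "nat+nat+unit \<Rightarrow> real"
      show "indep_vars (\<lambda>_. borel) (\<lambda>i \<omega>. if \<bar>\<alpha> i \<omega> * (X i \<omega> - \<mu>)\<bar> \<le> L then \<alpha> i \<omega> * (X i \<omega> - \<mu>) else 0) (bl l)"
      proof (rule indep_group[OF indZ])
        show "\<And>i. i \<in> bl l \<Longrightarrow> K i \<subseteq> I0" using blsub(1)[of l] by (auto simp: K_def I0_def)
        show "disjoint_family_on K (bl l)" by (auto simp: disjoint_family_on_def K_def)
        show "g i \<in> borel_measurable (PiM (K i) (\<lambda>_. borel))" for i
          unfolding g_def K_def by measurable
        show "\<And>i \<omega>. i \<in> bl l \<Longrightarrow> (if \<bar>\<alpha> i \<omega> * (X i \<omega> - \<mu>)\<bar> \<le> L then \<alpha> i \<omega> * (X i \<omega> - \<mu>) else 0) = g i (restrict (\<lambda>j. Z j \<omega>) (K i))"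
          by (auto simp: g_def K_def Z_def tr_def)
      qed
    qed
    also have "\<dots> \<le> 1/6"
      unfolding L_def c_def[symmetric] using cnt[OF l] nt1 a Mp
      by (intro tail_arith[where nt="real nt"]) (auto simp: s_def)
    finally show ?thesis .
  qed
  define P1 where "P1 l \<omega> = ((\<Sum>i\<in>bl l. X i \<omega> - \<mu>) > c l * s)" for l \<omega>
  define P2 where "P2 l \<omega> = ((\<Sum>i\<in>bl l. \<alpha> i \<omega> * (X i \<omega> - \<mu>)) < - (c l * s))" for l \<omega>
  define B1 where "B1 = {\<omega>\<in>space M. real k \<le> 2 * (\<Sum>l\<in>{1..k}. of_bool (P1 l \<omega>))}"
  define B2 where "B2 = {\<omega>\<in>space M. real k \<le> 2 * (\<Sum>l\<in>{1..k}. of_bool (P2 l \<omega>))}"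
  define B3 where "B3 = (\<Union>l\<in>{1..k}. {\<omega>\<in>space M. (\<Sum>i\<in>bl l. \<alpha> i \<omega>) \<ge> real (c l) / 2})"
  have B3m: "B3 \<in> sets M" unfolding B3_def by (intro sets.finite_UN) auto
  have B1m: "B1 \<in> sets M" unfolding B1_def P1_def by measurable
  have B2m: "B2 \<in> sets M" unfolding B2_def P2_def by measurable
  have PB1: "prob B1 \<le> exp (- real k / 8)"
    unfolding B1_def
  proof (rule count_bound)
    show "finite {1..k}" "card {1..k} = k" "k > 0" using k by auto
    show "{\<omega>\<in>space M. P1 l \<omega>} \<in> sets M" for l unfolding P1_def by measurable
    show "prob {\<omega>\<in>space M. P1 l \<omega>} \<le> 1/6" if "l \<in> {1..k}" for l
      unfolding P1_def using tail1[OF that] .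
    define K :: "nat \<Rightarrow> (nat+nat+unit) set" where "K l = Inl ` bl l" for l
    define g where "g l f = (of_bool ((\<Sum>i\<in>bl l. f (Inl i) - \<mu>) > c l * s) :: real)" for l and f :: "nat+nat+unit \<Rightarrow> real"
    show "indep_vars (\<lambda>_. borel) (\<lambda>l \<omega>. of_bool (P1 l \<omega>) :: real) {1..k}"
    proof (rule indep_group[OF indZ])
      show "\<And>l. l \<in> {1..k} \<Longrightarrow> K l \<subseteq> I0" using blsub(1) by (auto simp: K_def I0_def)
      show "disjoint_family_on K {1..k}" unfolding disjoint_family_on_def
      proof (intro ballI impI)
        fix m m' assume "m \<in> {1..k}" "m' \<in> {1..k}" "m \<noteq> m'"
        then have "bl m \<inter> bl m' = {}" by (rule bldisj)
        then show "K m \<inter> K m' = {}" unfolding K_def by auto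
      qed
      show "g l \<in> borel_measurable (PiM (K l) (\<lambda>_. borel))" for l
      proof -
        have [measurable]: "(\<lambda>f. \<Sum>i\<in>bl l. f (Inl i) - \<mu>) \<in> borel_measurable (PiM (K l) (\<lambda>_. borel))"
        proof (rule borel_measurable_sum)
          fix i assume "i \<in> bl l"
          then have "Inl i \<in> K l" by (simp add: K_def)
          then show "(\<lambda>f. f (Inl i) - \<mu>) \<in> borel_measurable (PiM (K l) (\<lambda>_. borel))" by measurable
        qed
        show ?thesis unfolding g_def by measurable
      qed
      show "\<And>l \<omega>. l \<in> {1..k} \<Longrightarrow> of_bool (P1 l \<omega>) = g l (restrict (\<lambda>j. Z j \<omega>) (K l))"
        by (auto simp: g_def K_def Z_def P1_def intro!: sum.cong)
    qed
  qed
  have PB2: "prob B2 \<le> exp (- real k / 8)"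
    unfolding B2_def
  proof (rule count_bound)
    show "finite {1..k}" "card {1..k} = k" "k > 0" using k by auto
    show "{\<omega>\<in>space M. P2 l \<omega>} \<in> sets M" for l unfolding P2_def by measurable
    show "prob {\<omega>\<in>space M. P2 l \<omega>} \<le> 1/6" if "l \<in> {1..k}" for l
      unfolding P2_def using tail2[OF that] .
    define K :: "nat \<Rightarrow> (nat+nat+unit) set" where "K l = Inl ` bl l \<union> Inr ` Inl ` bl l" for l
    define g where "g l f = (of_bool ((\<Sum>i\<in>bl l. f (Inr (Inl i)) * (f (Inl i) - \<mu>)) < - (c l * s)) :: real)" for l and f :: "nat+nat+unit \<Rightarrow> real"
    show "indep_vars (\<lambda>_. borel) (\<lambda>l \<omega>. of_bool (P2 l \<omega>) :: real) {1..k}"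
    proof (rule indep_group[OF indZ])
      show "K l \<subseteq> I0" if "l \<in> {1..k}" for l
      proof -
        have "Inl ` bl l \<subseteq> Inl ` {1..n}" "Inr ` Inl ` bl l \<subseteq> Inr ` Inl ` {1..n}"
          using blsub(1)[of l] by (auto intro!: image_mono)
        then show ?thesis unfolding K_def I0_def by blast
      qed
      show "disjoint_family_on K {1..k}" unfolding disjoint_family_on_def
      proof (intro ballI impI)
        fix m m' assume "m \<in> {1..k}" "m' \<in> {1..k}" "m \<noteq> m'"
        then have "bl m \<inter> bl m' = {}" by (rule bldisj)
        then show "K m \<inter> K m' = {}" unfolding K_def by auto
      qed
      show "g l \<in> borel_measurable (PiM (K l) (\<lambda>_. borel))" for l
      proof -
        have [measurable]: "(\<lambda>f. \<Sum>i\<in>bl l. f (Inr (Inl i)) * (f (Inl i) - \<mu>)) \<in> borel_measurable (PiM (K l) (\<lambda>_. borel))"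
        proof (rule borel_measurable_sum)
          fix i assume "i \<in> bl l"
          then have "Inl i \<in> K l" "Inr (Inl i) \<in> K l" by (simp_all add: K_def)
          then show "(\<lambda>f. f (Inr (Inl i)) * (f (Inl i) - \<mu>)) \<in> borel_measurable (PiM (K l) (\<lambda>_. borel))" by measurable
        qed
        show ?thesis unfolding g_def by measurable
      qed
      show "\<And>l \<omega>. l \<in> {1..k} \<Longrightarrow> of_bool (P2 l \<omega>) = g l (restrict (\<lambda>j. Z j \<omega>) (K l))"
        by (auto simp: g_def K_def Z_def P2_def intro!: sum.cong)
    qed
  qed
  have PB3: "prob B3 \<le> real k * exp (- real nt / 8)"
  proof -
    have "prob B3 \<le> (\<Sum>l\<in>{1..k}. prob {\<omega>\<in>space M. (\<Sum>i\<in>bl l. \<alpha> i \<omega>) \<ge> real (c l) / 2})"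
      unfolding B3_def by (intro measure_UNION_le) auto
    also have "\<dots> \<le> (\<Sum>l\<in>{1..k}. exp (- real nt / 8))"
    proof (rule sum_mono)
      fix l assume l: "l \<in> {1..k}"
      have "prob {\<omega>\<in>space M. (\<Sum>i\<in>bl l. \<alpha> i \<omega>) \<ge> real (c l) / 2} \<le> exp (- real (c l) / 8)"
      proof (rule alpha_block)
        show "finite (bl l)" "card (bl l) = c l" "c l > 0" using blsub cpos[OF l] by (auto simp: c_def)
        fix i assume "i \<in> bl l"
        then have i: "i \<in> {1..n}" using blsub(1)[of l] by blast
        show "AE \<omega> in M. \<alpha> i \<omega> \<in> {-1..1}" by (auto intro!: eventually_mono[OF aAE[OF i]])
        show "expectation (\<alpha> i) = 0" by (rule aE[OF i])
      next
        define K :: "nat \<Rightarrow> (nat+nat+unit) set" where "K i = {Inr (Inl i)}" for i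
        define g where "g i f = f (Inr (Inl i))" for i and f :: "nat+nat+unit \<Rightarrow> real"
        show "indep_vars (\<lambda>_. borel) \<alpha> (bl l)"
        proof (rule indep_group[OF indZ])
          show "\<And>i. i \<in> bl l \<Longrightarrow> K i \<subseteq> I0" using blsub(1)[of l] by (auto simp: K_def I0_def)
          show "disjoint_family_on K (bl l)" by (auto simp: disjoint_family_on_def K_def)
          show "g i \<in> borel_measurable (PiM (K i) (\<lambda>_. borel))" for i
            unfolding g_def K_def by measurable
          show "\<And>i \<omega>. i \<in> bl l \<Longrightarrow> \<alpha> i \<omega> = g i (restrict (\<lambda>j. Z j \<omega>) (K i))"
            by (auto simp: g_def K_def Z_def)
        qed
      qed
      also have "\<dots> \<le> exp (- real nt / 8)" using cnt[OF l] by simp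
      finally show "prob {\<omega>\<in>space M. (\<Sum>i\<in>bl l. \<alpha> i \<omega>) \<ge> real (c l) / 2} \<le> exp (- real nt / 8)" .
    qed
    also have "\<dots> = real k * exp (- real nt / 8)" by simp
    finally show ?thesis .
  qed
  define E where "E = {\<omega> \<in> space M.
           rmom_U n k (\<lambda>i. X i \<omega>) (\<lambda>i. \<alpha> i \<omega>) (p \<omega>) - ereal \<mu>
             > ereal (4 * (12 * Mm) powr (1 / (1 + a)) * (1 / real (n div k)) powr (a / (1 + a)))}"
  have sub: "E \<inter> space M \<subseteq> B1 \<union> B2 \<union> B3"
  proof
    fix \<omega> assume h: "\<omega> \<in> E \<inter> space M"
    show "\<omega> \<in> B1 \<union> B2 \<union> B3"
    proof (rule ccontr)
      assume nb: "\<omega> \<notin> B1 \<union> B2 \<union> B3"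
      have sp: "\<omega> \<in> space M" using h by auto
      have "rmom_U n k (\<lambda>i. X i \<omega>) (\<lambda>i. \<alpha> i \<omega>) (p \<omega>) \<le> ereal (\<mu> + 4 * s)"
      proof (rule det[OF k s0])
        show "\<not> (real k \<le> 2 * (\<Sum>l\<in>{1..k}. of_bool ((\<Sum>i\<in>block n k l. X i \<omega> - \<mu>) > real (card (block n k l)) * s)))"
          using nb sp unfolding B1_def P1_def bl_def c_def by blast
        show "\<not> (real k \<le> 2 * (\<Sum>l\<in>{1..k}. of_bool ((\<Sum>i\<in>block n k l. \<alpha> i \<omega> * (X i \<omega> - \<mu>)) < - (real (card (block n k l)) * s))))"
          using nb sp unfolding B2_def P2_def bl_def c_def by blast
        show "\<forall>l\<in>{1..k}. (\<Sum>i\<in>block n k l. \<alpha> i \<omega>) < real (card (block n k l)) / 2"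
          using nb sp unfolding B3_def bl_def c_def by (auto simp: not_le)
      qed
      moreover have "rmom_U n k (\<lambda>i. X i \<omega>) (\<lambda>i. \<alpha> i \<omega>) (p \<omega>) - ereal \<mu> > ereal (4 * s)"
      proof -
        have eq: "4 * (12 * Mm) powr (1 / (1 + a)) * (1 / real (n div k)) powr (a / (1 + a)) = 4 * s"
          unfolding s_def nt_def by (simp only: mult.assoc)
        have "\<omega> \<in> E" using h by blast
        then show ?thesis unfolding E_def eq by blast
      qed
      ultimately show False using ereal_aux by blast
    qed
  qed
  have "outer_prob M E \<le> prob (B1 \<union> B2 \<union> B3)"
    unfolding outer_prob_def
  proof (rule cInf_lower)
    show "prob (B1 \<union> B2 \<union> B3) \<in> measure M ` {A \<in> sets M. E \<inter> space M \<subseteq> A}"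
      using sub B1m B2m B3m by auto
    show "bdd_below (measure M ` {A \<in> sets M. E \<inter> space M \<subseteq> A})"
      by (rule bdd_belowI[of _ 0]) auto
  qed
  also have "\<dots> \<le> prob (B1 \<union> B2) + prob B3" using B1m B2m B3m by (intro measure_Un_le) auto
  also have "\<dots> \<le> prob B1 + prob B2 + prob B3" using B1m B2m by (simp add: measure_Un_le)
  also have "\<dots> \<le> exp (- real k / 8) + exp (- real k / 8) + real k * exp (- real nt / 8)"
    using PB1 PB2 PB3 by linarith
  also have "\<dots> \<le> 2 * real k * exp (- real (n div k) / 8) + 2 * exp (- real k / 8)"
    unfolding nt_def by simp
  finally show ?thesis unfolding E_def .
qed
end
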